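(* Let $n\geq2$, and let $f,g:[0,\infty)\to[0,\infty)$ be continuous, log-concave functions, $C^2$-smooth on $(0,\infty)$, such that $f(0)>0$, $g(0)>0$ and $\int f<\infty$, $\int g<\infty$. Assume that for any $t\geq0$, $$ |f(t)-g(t)|\leq e^{-5n}\min\{f(0),g(0)\}. $$ Then $(1-e^{-n})t_n(g)\leq t_n(f)\leq(1+e^{-n})t_n(g)$.
   Context: For a continuous log-concave function $h:[0,\infty)\to[0,\infty)$, $C^2$-smooth on $(0,\infty)$, with $0<\int_0^\infty h<\infty$, and for $p>1$, $t_p(h)$ denotes the unique $t>0$ such that $h(t)>0$ and $h'(t)/h(t)=-(p-1)/t$ (under these assumptions such $t$ exists and is unique). A function $h\ge 0$ is log-concave if $h(\lambda x+(1-\lambda)y)\geq h(x)^\lambda h(y)^{1-\lambda}$. *)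

theory Defs
  imports "HOL-Analysis.Analysis"
begin

definition log_concave_on_nonneg :: "(real \<Rightarrow> real) \<Rightarrow> bool" where
  "log_concave_on_nonneg h \<longleftrightarrow>
     (\<forall>x\<ge>0. \<forall>y\<ge>0. \<forall>l\<in>{0..1}.
        h (l * x + (1 - l) * y) \<ge> h x powr l * h y powr (1 - l))"

definition C2_on_pos :: "(real \<Rightarrow> real) \<Rightarrow> bool" where
  "C2_on_pos h \<longleftrightarrow>
     (\<exists>h' h''. (\<forall>x>0. (h has_real_derivative h' x) (at x) \<and>
                        (h' has_real_derivative h'' x) (at x)) \<and>
               continuous_on {0<..} h'')"

definition t_p :: "real \<Rightarrow> (real \<Rightarrow> real) \<Rightarrow> real" where
  "t_p p h = (THE t. t > 0 \<and> h t > 0 \<and> deriv h t / h t = - (p - 1) / t)"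

end

theory Submission imports Defs begin

lemma deriv_lower_from_quot:
  fixes q :: "real \<Rightarrow> real"
  assumes dq: "(q has_real_derivative E) (at 0)"
    and ineq: "\<And>l. 0 < l \<Longrightarrow> l \<le> 1 \<Longrightarrow> q l - q 0 \<ge> l * K"
  shows "K \<le> E"
proof -
  have "((\<lambda>y. (q y - q 0) / (y - 0)) \<longlongrightarrow> E) (at 0)"
    using dq by (simp add: has_field_derivative_iff)
  then have lim: "((\<lambda>y. (q y - q 0) / y) \<longlongrightarrow> E) (at_right 0)"
    by (simp add: filterlim_at_split)
  have ev: "eventually (\<lambda>y. K \<le> (q y - q 0) / y) (at_right (0::real))"
  proof (subst eventually_at_right[OF zero_less_one], intro exI[of _ 1] conjI allI impI)
    fix y :: real assume "0 < y" "y < 1"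
    then show "K \<le> (q y - q 0) / y" using ineq[of y] by (simp add: pos_le_divide_eq mult.commute)
  qed simp
  show ?thesis by (rule tendsto_lowerbound[OF lim ev]) simp
qed

lemma lc_tangent:
  assumes lc: "log_concave_on_nonneg h" and dh: "(h has_real_derivative D) (at a)"
    and a: "a \<ge> 0" and ha: "h a > 0" and t: "t \<ge> 0"
  shows "h t \<le> h a * exp (D / h a * (t - a))"
proof (cases "h t \<le> 0")
  case True
  have "0 < h a * exp (D / h a * (t - a))" using ha by simp
  then show ?thesis using True by linarith
next
  case False
  then have ht: "h t > 0" by simp
  define q where "q l = ln (h (a + l * (t - a)))" for l
  define K where "K = ln (h t) - ln (h a)"
  have d1: "((\<lambda>l. a + l * (t - a)) has_real_derivative (t - a)) (at 0)"
    by (auto intro!: derivative_eq_intros)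
  have dh0: "(h has_real_derivative D) (at (a + 0 * (t - a)))" using dh by simp
  have d2: "((\<lambda>l. h (a + l * (t - a))) has_real_derivative D * (t - a)) (at 0)"
    using DERIV_chain2[OF dh0 d1] .
  have dln: "(ln has_real_derivative 1 / h (a + 0 * (t - a))) (at (h (a + 0 * (t - a))))"
    using ha by (simp add: DERIV_ln_divide)
  have dq: "(q has_real_derivative D / h a * (t - a)) (at 0)"
    using DERIV_chain2[OF dln d2] unfolding q_def by simp
  have ineq: "q l - q 0 \<ge> l * K" if l: "0 < l" "l \<le> 1" for l
  proof -
    have "h (l * t + (1 - l) * a) \<ge> h t powr l * h a powr (1 - l)"
      using lc t a l unfolding log_concave_on_nonneg_def by auto
    moreover have pos: "h t powr l * h a powr (1 - l) > 0" using ht ha by simp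
    ultimately have "ln (h t powr l * h a powr (1 - l)) \<le> ln (h (l * t + (1 - l) * a))"
      by simp
    moreover have "ln (h t powr l * h a powr (1 - l)) = l * ln (h t) + (1 - l) * ln (h a)"
      using ht ha by (simp add: ln_mult ln_powr)
    moreover have "a + l * (t - a) = l * t + (1 - l) * a" by algebra
    ultimately show ?thesis unfolding q_def K_def by (simp add: algebra_simps)
  qed
  have "K \<le> D / h a * (t - a)" by (rule deriv_lower_from_quot[OF dq ineq])
  then have "ln (h t) \<le> ln (h a) + D / h a * (t - a)" unfolding K_def by simp
  then have "exp (ln (h t)) \<le> exp (ln (h a) + D / h a * (t - a))" by simp
  then show ?thesis using ht ha by (simp add: exp_add)
qed


lemma C2_facts:
  assumes "C2_on_pos h"
  shows "\<And>x. x > 0 \<Longrightarrow> (h has_real_derivative deriv h x) (at x)"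
    and "continuous_on {0<..} (deriv h)"
proof -
  obtain h' h'' where d: "\<forall>x>0. (h has_real_derivative h' x) (at x) \<and>
      (h' has_real_derivative h'' x) (at x)"
    using assms unfolding C2_on_pos_def by blast
  have eq: "deriv h x = h' x" if "x > 0" for x
    using d that DERIV_imp_deriv by blast
  show "(h has_real_derivative deriv h x) (at x)" if "x > 0" for x
    using d that eq by simp
  have "continuous_on {0<..} h'"
    by (rule continuous_at_imp_continuous_on) (use d DERIV_isCont in auto)
  then show "continuous_on {0<..} (deriv h)"
    by (rule continuous_on_cong[THEN iffD1, rotated 2]) (auto simp: eq)
qed

lemma ivt_trick:
  fixes h :: "real \<Rightarrow> real"
  assumes c: "continuous_on {0..} h" and s: "s \<ge> 0" and m: "m > 0" "h s \<ge> m"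
    and H: "\<And>t. t \<ge> s \<Longrightarrow> h t > 0 \<Longrightarrow> h t \<ge> m"
    and t: "t \<ge> s"
  shows "h t \<ge> m"
proof (rule ccontr)
  assume "\<not> m \<le> h t"
  then have "h t \<le> m / 2" using H[OF t] m by force
  moreover have "continuous_on {s..t} h" using s by (intro continuous_on_subset[OF c]) auto
  ultimately obtain x where x: "s \<le> x" "x \<le> t" "h x = m / 2"
    using IVT2'[of h t "m/2" s] m t by auto
  then show False using H[of x] m by auto
qed

lemma nonint:
  fixes h :: "real \<Rightarrow> real"
  assumes i: "h integrable_on {0..}" and c: "continuous_on {0..} h"
    and nn: "\<And>t. t \<ge> 0 \<Longrightarrow> h t \<ge> 0" and s: "s \<ge> 0" and m: "m > 0"
    and H: "\<And>t. t \<ge> s \<Longrightarrow> h t \<ge> m"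
  shows False
proof -
  define I where "I = integral {0..} h"
  define k where "k = s + (\<bar>I\<bar> + 1) / m"
  have sk: "s \<le> k" using m by (simp add: k_def)
  have ci: "continuous_on {s..k} h" using s by (intro continuous_on_subset[OF c]) auto
  have i2: "h integrable_on {s..k}" by (rule integrable_continuous_interval[OF ci])
  have "integral {s..k} (\<lambda>x. m) \<le> integral {s..k} h"
    by (rule integral_le) (use i2 H in auto)
  moreover have "integral {s..k} (\<lambda>x. m) = (k - s) * m" using sk by simp
  moreover have "(k - s) * m = \<bar>I\<bar> + 1" using m by (simp add: k_def)
  moreover have "integral {s..k} h \<le> I" unfolding I_def
    by (rule integral_subset_le) (use i2 i s nn in auto)
  ultimately show False by linarith
qed


lemma tanlog:
  assumes lc: "log_concave_on_nonneg h" and C2: "C2_on_pos h"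
    and a: "a > 0" and ha: "h a > 0" and t: "t \<ge> 0" and ht: "h t > 0"
  shows "ln (h t) \<le> ln (h a) + deriv h a / h a * (t - a)"
proof -
  have "h t \<le> h a * exp (deriv h a / h a * (t - a))"
    using lc_tangent[OF lc C2_facts(1)[OF C2 a]] a ha t by simp
  then have "ln (h t) \<le> ln (h a * exp (deriv h a / h a * (t - a)))"
    using ht ha by simp
  also have "\<dots> = ln (h a) + deriv h a / h a * (t - a)" using ha by (simp add: ln_mult)
  finally show ?thesis .
qed

lemma psi_mono:
  assumes lc: "log_concave_on_nonneg h" and C2: "C2_on_pos h"
    and a: "a > 0" "a \<le> b" and ha: "h a > 0" and hb: "h b > 0"
  shows "deriv h b / h b \<le> deriv h a / h a"
proof (cases "a = b")
  case False
  have 1: "ln (h b) \<le> ln (h a) + deriv h a / h a * (b - a)"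
    using tanlog[OF lc C2 a(1) ha _ hb] a by simp
  have 2: "ln (h a) \<le> ln (h b) + deriv h b / h b * (a - b)"
    using tanlog[OF lc C2 _ hb _ ha] a by simp
  define u where "u = deriv h a / h a"
  define v where "v = deriv h b / h b"
  have "0 \<le> u * (b - a) + v * (a - b)" using 1 2 unfolding u_def[symmetric] v_def[symmetric] by linarith
  then have "0 \<le> (deriv h a / h a - deriv h b / h b) * (b - a)" unfolding u_def[symmetric] v_def[symmetric] by (simp add: algebra_simps)
  moreover have "b - a > 0" using a False by simp
  ultimately show ?thesis by (simp add: zero_le_mult_iff)
qed simp

lemma tp_exists:
  fixes h :: "real \<Rightarrow> real" and p :: real
  assumes p: "p > 1" and c: "continuous_on {0..} h" and nn: "\<forall>t\<ge>0. h t \<ge> 0"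
    and lc: "log_concave_on_nonneg h" and C2: "C2_on_pos h" and h0: "h 0 > 0"
    and i: "h integrable_on {0..}"
  shows "\<exists>t. t > 0 \<and> h t > 0 \<and> deriv h t / h t = - (p - 1) / t"
proof -
  define \<psi> where "\<psi> x = deriv h x / h x" for x
  define F where "F x = x * \<psi> x + (p - 1)" for x
  have "continuous (at 0 within {0..}) h" using c by (simp add: continuous_on_eq_continuous_within)
  then obtain d where d: "d > 0" "\<And>x. x \<in> {0..} \<Longrightarrow> dist x 0 < d \<Longrightarrow> dist (h x) (h 0) < h 0 / 2"
    using h0 unfolding continuous_within_eps_delta by (metis half_gt_zero)
  define s where "s = d / 2"
  have hs: "\<bar>h s - h 0\<bar> < h 0 / 2" using d(1) d(2)[of s] unfolding s_def dist_real_def by auto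
  have hs2: "h s > 0" using abs_less_iff[of "h s - h 0" "h 0 / 2"] hs by linarith
  have s: "s > 0" "h s > 0" using d(1) hs2 unfolding s_def by auto
  define t0 where "t0 = min s ((p - 1) / (2 * (\<bar>\<psi> s\<bar> + 1)))"
  have t0: "t0 > 0" "t0 \<le> s" using s p by (auto simp: t0_def)
  have ht0': "\<bar>h t0 - h 0\<bar> < h 0 / 2" using d(2)[of t0] t0 unfolding s_def dist_real_def by auto
  have ht0: "h t0 > 0" using abs_less_iff[of "h t0 - h 0" "h 0 / 2"] ht0' by linarith
  have "\<psi> s \<le> \<psi> t0" unfolding \<psi>_def using psi_mono[OF lc C2 t0 ht0 s(2)] .
  moreover have "t0 * \<bar>\<psi> s\<bar> \<le> (p - 1) / 2"
  proof -
    have "t0 \<le> (p - 1) / (2 * (\<bar>\<psi> s\<bar> + 1))" by (simp add: t0_def)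
    then have "t0 * (2 * (\<bar>\<psi> s\<bar> + 1)) \<le> p - 1" by (simp add: pos_le_divide_eq)
    then show ?thesis using t0 by (simp add: algebra_simps)
  qed
  ultimately have F0: "F t0 > 0"
  proof -
    assume a1: "\<psi> s \<le> \<psi> t0" and a2: "t0 * \<bar>\<psi> s\<bar> \<le> (p - 1) / 2"
    have "t0 * \<psi> s \<le> t0 * \<psi> t0" using a1 t0 by (intro mult_left_mono) auto
    moreover have "t0 * (- \<bar>\<psi> s\<bar>) \<le> t0 * \<psi> s" using t0 by (intro mult_left_mono) auto
    ultimately show ?thesis unfolding F_def using a2 p by simp
  qed
  have "\<exists>t1. t1 > t0 \<and> h t1 > 0 \<and> F t1 \<le> 0"
  proof (rule ccontr)
    assume A: "\<not> ?thesis"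
    define m where "m = h t0 / exp (p - 1)"
    have m: "m > 0" using ht0 by (simp add: m_def)
    have lb: "h t \<ge> m" if "t \<ge> t0" "h t > 0" for t
    proof (cases "t = t0")
      case True then show ?thesis using ht0 p by (simp add: m_def divide_le_eq)
    next
      case False
      then have tt: "t > t0" using that by simp
      then have Ft: "F t > 0" using A that by auto
      have tpos: "t > 0" using tt t0 by simp
      have "ln (h t0) \<le> ln (h t) + \<psi> t * (t0 - t)"
        unfolding \<psi>_def using tanlog[OF lc C2 tpos that(2) _ ht0] t0 by simp
      moreover have "\<psi> t * (t0 - t) \<le> p - 1"
      proof -
        have "t * \<psi> t > - (p - 1)" using Ft by (simp add: F_def)
        then have "\<psi> t > - (p - 1) / t" using tpos by (simp add: divide_less_eq mult.commute)
        then have "\<psi> t * (t0 - t) \<le> (- (p - 1) / t) * (t0 - t)"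
          using tt by (intro mult_right_mono_neg) auto
        also have "\<dots> = (p - 1) * (t - t0) / t" by (simp add: field_simps)
        also have "\<dots> \<le> p - 1" using tpos t0 p tt by (simp add: divide_le_eq)
        finally show ?thesis .
      qed
      ultimately have "ln (h t0) \<le> ln (h t) + (p - 1)" by simp
      then have "exp (ln (h t0)) \<le> exp (ln (h t) + (p - 1))" by simp
      then have "h t0 \<le> h t * exp (p - 1)" using ht0 that(2) by (simp add: exp_add)
      then show ?thesis unfolding m_def by (simp add: divide_le_eq)
    qed
    have "\<And>t. t \<ge> t0 \<Longrightarrow> h t \<ge> m"
      by (rule ivt_trick[OF c]) (use t0 m lb ht0 in auto)
    then show False using nonint[OF i c _ _ m, of t0] nn t0 by auto
  qed
  then obtain t1 where t1: "t1 > t0" "h t1 > 0" "F t1 \<le> 0" by blast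
  have pos: "h x > 0" if "t0 \<le> x" "x \<le> t1" for x
  proof -
    define l where "l = (t1 - x) / (t1 - t0)"
    have l: "0 \<le> l" "l \<le> 1" using that t1 by (auto simp: l_def divide_le_eq)
    have "l * (t1 - t0) = t1 - x" unfolding l_def using t1 by simp
    then have xe: "x = l * t0 + (1 - l) * t1" by (simp add: algebra_simps)
    have "h (l * t0 + (1 - l) * t1) \<ge> h t0 powr l * h t1 powr (1 - l)"
      using lc t0 t1 l unfolding log_concave_on_nonneg_def by auto
    moreover have "h t0 powr l * h t1 powr (1 - l) > 0" using ht0 t1 by simp
    ultimately show ?thesis using xe by simp
  qed
  have cF: "continuous_on {t0..t1} F"
  proof -
    have ch: "continuous_on {t0..t1} h" using t0 by (intro continuous_on_subset[OF c]) auto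
    have cd: "continuous_on {t0..t1} (deriv h)" using t0 by (intro continuous_on_subset[OF C2_facts(2)[OF C2]]) auto
    show ?thesis unfolding F_def \<psi>_def
      by (intro continuous_intros ch cd) (use pos in force)
  qed
  obtain x where x: "t0 \<le> x" "x \<le> t1" "F x = 0"
    using IVT2'[of F t1 0 t0, OF t1(3) _ _ cF] F0 t1 by auto
  have xp: "x > 0" using x t0 by simp
  have "\<psi> x = - (p - 1) / x" using x(3) xp unfolding F_def by (simp add: field_simps)
  then show ?thesis using xp pos[OF x(1,2)] unfolding \<psi>_def by blast
qed

lemma tp_props:
  fixes h :: "real \<Rightarrow> real" and p :: real
  assumes p: "p > 1" and c: "continuous_on {0..} h" and nn: "\<forall>t\<ge>0. h t \<ge> 0"
    and lc: "log_concave_on_nonneg h" and C2: "C2_on_pos h" and h0: "h 0 > 0"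
    and i: "h integrable_on {0..}"
  shows "t_p p h > 0 \<and> h (t_p p h) > 0 \<and> deriv h (t_p p h) / h (t_p p h) = - (p - 1) / t_p p h"
  unfolding t_p_def
proof (rule theI')
  show "\<exists>!t. t > 0 \<and> h t > 0 \<and> deriv h t / h t = - (p - 1) / t"
  proof (rule ex_ex1I)
    show "\<exists>t. t > 0 \<and> h t > 0 \<and> deriv h t / h t = - (p - 1) / t"
      by (rule tp_exists[OF assms])
  next
    have le: "b \<le> a" if A: "a > 0" "h a > 0" "deriv h a / h a = - (p - 1) / a"
         "b > 0" "h b > 0" "deriv h b / h b = - (p - 1) / b" for a b
    proof (rule ccontr)
      assume "\<not> b \<le> a"
      then have "a \<le> b" by simp
      from psi_mono[OF lc C2 A(1) this A(2) A(5)] A have "- (p - 1) / b \<le> - (p - 1) / a" by simp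
      then have "(p - 1) * b \<le> (p - 1) * a" using A by (simp add: field_simps)
      then have "a \<ge> b" using p by simp
      then show False using \<open>\<not> b \<le> a\<close> by simp
    qed
    fix a b assume "a > 0 \<and> h a > 0 \<and> deriv h a / h a = - (p - 1) / a"
      "b > 0 \<and> h b > 0 \<and> deriv h b / h b = - (p - 1) / b"
    then show "a = b" using le by (meson order_antisym)
  qed
qed

lemma final_ineq:
  fixes y e \<epsilon> :: real
  assumes y: "y > 0" and e: "0 \<le> e" "e \<le> 1/100" and ee: "18 * e \<le> \<epsilon>\<^sup>2" and \<epsilon>: "\<epsilon> > 0"
    and H: "1 - 2 * e \<le> y * exp (1 - y)"
  shows "1 - \<epsilon> \<le> y \<and> y \<le> 1 + \<epsilon>"
proof -
  have sq: "\<bar>y - 1\<bar> \<le> \<epsilon>" if "(y - 1)\<^sup>2 \<le> 18 * e"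
  proof -
    have "(y - 1)\<^sup>2 \<le> \<epsilon>\<^sup>2" using that ee by linarith
    then show ?thesis using \<epsilon> by (metis abs_le_square_iff abs_of_pos)
  qed
  show ?thesis
  proof (cases "y \<ge> 1")
    case True
    define d where "d = y - 1"
    have d: "d \<ge> 0" using True by (simp add: d_def)
    have w: "exp (d/2) \<ge> 1 + d/2" by simp
    have "exp d = exp (d/2) * exp (d/2)" by (simp flip: exp_add)
    also have "\<dots> \<ge> (1 + d/2) * (1 + d/2)" using w d by (intro mult_mono) auto
    finally have ed: "exp d \<ge> (1 + d/2) * (1 + d/2)" .
    have "1 - 2 * e \<le> (1 + d) / exp d" using H by (simp add: d_def exp_diff)
    then have "(1 - 2 * e) * exp d \<le> 1 + d" by (simp add: le_divide_eq)
    moreover have "(1 - 2 * e) * ((1 + d/2) * (1 + d/2)) \<le> (1 - 2 * e) * exp d"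
      using ed e by (intro mult_left_mono) auto
    ultimately have K: "(1 - 2 * e) * ((1 + d/2) * (1 + d/2)) \<le> 1 + d" by linarith
    then have K2: "(1 - 2 * e) * (d * d) \<le> 8 * e * (1 + d)" by (simp add: algebra_simps)
    have "d < 1"
    proof (rule ccontr)
      assume "\<not> d < 1"
      then have d1: "d \<ge> 1" by simp
      have "e * 1 \<le> e * d" using d1 e by (intro mult_left_mono) auto
      then have "8 * e * (1 + d) \<le> 16 * e * d" by (simp add: algebra_simps)
      also have "\<dots> \<le> (16/100) * d" using e d by (intro mult_right_mono) auto
      also have "\<dots> < (98/100) * d" using d1 by simp
      also have "\<dots> \<le> (98/100) * (d * d)" using d1 by (simp add: mult_le_cancel_left1)
      also have "\<dots> \<le> (1 - 2 * e) * (d * d)" using e by (intro mult_right_mono) auto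
      finally show False using K2 by linarith
    qed
    then have "e * d \<le> e * 1" using e by (intro mult_left_mono) auto
    then have "8 * e * (1 + d) \<le> 16 * e" by (simp add: algebra_simps)
    moreover have "(98/100) * (d * d) \<le> (1 - 2 * e) * (d * d)" using e by (intro mult_right_mono) auto
    ultimately have "(98/100) * (d * d) \<le> 16 * e" using K2 by linarith
    then have "d\<^sup>2 \<le> 18 * e" using e by (simp add: power2_eq_square)
    then have "\<bar>y - 1\<bar> \<le> \<epsilon>" using sq by (simp add: d_def)
    then show ?thesis unfolding abs_le_iff by linarith
  next
    case False
    define d where "d = 1 - y"
    have d: "d > 0" "d < 1" using False y by (auto simp: d_def)
    have w: "exp (- (d/2)) \<ge> 1 - d/2" using exp_ge_add_one_self[of "- (d/2)"] by simp
    have w2: "exp (d/2) * (1 - d/2) \<le> 1"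
    proof -
      have "exp (d/2) * (1 - d/2) \<le> exp (d/2) * exp (- (d/2))" using w by (intro mult_left_mono) auto
      also have "\<dots> = 1" by (simp flip: exp_add)
      finally show ?thesis .
    qed
    have "exp d * ((1 - d/2) * (1 - d/2)) = (exp (d/2) * (1 - d/2)) * (exp (d/2) * (1 - d/2))"
      by (simp add: algebra_simps flip: exp_add)
    also have "\<dots> \<le> 1 * 1" using w2 d by (intro mult_mono) auto
    finally have ed: "exp d * ((1 - d/2) * (1 - d/2)) \<le> 1" by simp
    have "1 - 2 * e \<le> (1 - d) * exp d" using H by (simp add: d_def)
    then have "(1 - 2 * e) * ((1 - d/2) * (1 - d/2)) \<le> (1 - d) * (exp d * ((1 - d/2) * (1 - d/2)))"
      using d by (simp add: mult_right_mono mult.assoc)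
    also have "\<dots> \<le> (1 - d) * 1" using ed d by (intro mult_left_mono) auto
    finally have K: "(1 - 2 * e) * ((1 - d/2) * (1 - d/2)) \<le> 1 - d" by simp
    have eq: "(1 - 2 * e) * ((1 - d/2) * (1 - d/2)) = (1 - d) - 2 * (e * (1 - d)) + ((1 - 2 * e) * (d * d)) / 4"
      by (simp add: algebra_simps)
    have K2: "(1 - 2 * e) * (d * d) \<le> 8 * (e * (1 - d))" using K unfolding eq by linarith
    moreover have "e * (1 - d) \<le> e * 1" using e d by (intro mult_left_mono) auto
    ultimately have "(1 - 2 * e) * (d * d) \<le> 8 * e" by linarith
    moreover have "(98/100) * (d * d) \<le> (1 - 2 * e) * (d * d)" using e by (intro mult_right_mono) auto
    ultimately have "(98/100) * (d * d) \<le> 8 * e" by linarith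
    then have "d\<^sup>2 \<le> 18 * e" using e by (simp add: power2_eq_square)
    then have "(y - 1)\<^sup>2 \<le> 18 * e" by (simp add: d_def power2_commute)
    then have "\<bar>y - 1\<bar> \<le> \<epsilon>" using sq by simp
    then show ?thesis unfolding abs_le_iff by linarith
  qed
qed

lemma tangent_form:
  assumes lc: "log_concave_on_nonneg h" and C2: "C2_on_pos h"
    and a: "a > 0" and ha: "h a > 0" and psi: "deriv h a / h a = - c / a" and t: "t \<ge> 0"
  shows "h t \<le> h a * exp (c * (1 - t / a))"
proof -
  have "h t \<le> h a * exp (deriv h a / h a * (t - a))"
    using lc_tangent[OF lc C2_facts(1)[OF C2 a]] a ha t by simp
  also have "deriv h a / h a * (t - a) = c * (1 - t / a)" using a unfolding psi by (simp add: field_simps)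
  finally show ?thesis .
qed

lemma u_le1: "x * exp (1 - x) \<le> (1::real)"
proof -
  have "x \<le> exp (x - 1)" using exp_ge_add_one_self[of "x - 1"] by simp
  then show ?thesis by (simp add: exp_diff field_simps)
qed

lemma pow_exp_eq:
  fixes x a :: real and m :: nat
  assumes "a > 0"
  shows "(x * a) ^ m * exp (real m * (1 - x)) = a ^ m * (x * exp (1 - x)) ^ m"
  by (simp add: exp_of_nat_mult power_mult_distrib)

theorem lemma4p4:
  fixes n :: nat and f g :: "real \<Rightarrow> real"
  assumes "n \<ge> 2"
    and "continuous_on {0..} f" and "continuous_on {0..} g"
    and "\<forall>t\<ge>0. f t \<ge> 0" and "\<forall>t\<ge>0. g t \<ge> 0"
    and "log_concave_on_nonneg f" and "log_concave_on_nonneg g"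
    and "C2_on_pos f" and "C2_on_pos g"
    and "f 0 > 0" and "g 0 > 0"
    and "f integrable_on {0..}" and "g integrable_on {0..}"
    and "\<forall>t\<ge>0. \<bar>f t - g t\<bar> \<le> exp (- 5 * real n) * min (f 0) (g 0)"
  shows "(1 - exp (- real n)) * t_p (real n) g \<le> t_p (real n) f
         \<and> t_p (real n) f \<le> (1 + exp (- real n)) * t_p (real n) g"
proof -
  note A = assms
  define p where "p = real n"
  define m where "m = n - 1"
  define c where "c = real m"
  have p1: "p > 1" using A(1) by (simp add: p_def)
  have cp: "p - 1 = c" using A(1) by (simp add: p_def c_def m_def of_nat_diff)
  have m1: "m \<ge> 1" using A(1) by (simp add: m_def)
  define a where "a = t_p p f"
  define b where "b = t_p p g"
  have fa: "a > 0" "f a > 0" "deriv f a / f a = - c / a"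
    using tp_props[OF p1 A(2,4,6,8,10,12)] cp unfolding a_def by auto
  have gb: "b > 0" "g b > 0" "deriv g b / g b = - c / b"
    using tp_props[OF p1 A(3,5,7,9,11,13)] cp unfolding b_def by auto
  have Tf: "f t \<le> f a * exp (c * (1 - t / a))" if "t \<ge> 0" for t
    by (rule tangent_form[OF A(6,8) fa that])
  have Tg: "g t \<le> g b * exp (c * (1 - t / b))" if "t \<ge> 0" for t
    by (rule tangent_form[OF A(7,9) gb that])
  define E where "E = exp (- 5 * p)"
  define \<delta> where "\<delta> = E * min (f 0) (g 0)"
  define \<eta> where "\<eta> = exp (- 4 * p - 1)"
  have Ec: "E * exp c = \<eta>" unfolding E_def \<eta>_def using cp by (simp flip: exp_add)
  have E0: "E > 0" by (simp add: E_def)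
  have \<eta>0: "\<eta> > 0" by (simp add: \<eta>_def)
  have df: "\<delta> \<le> \<eta> * f a"
  proof -
    have "\<delta> \<le> E * f 0" unfolding \<delta>_def using E0 by (intro mult_left_mono) auto
    also have "\<dots> \<le> E * (f a * exp c)" using Tf[of 0] fa E0 by (intro mult_left_mono) auto
    also have "\<dots> = \<eta> * f a" using Ec by (simp add: algebra_simps)
    finally show ?thesis .
  qed
  have dg: "\<delta> \<le> \<eta> * g b"
  proof -
    have "\<delta> \<le> E * g 0" unfolding \<delta>_def using E0 by (intro mult_left_mono) auto
    also have "\<dots> \<le> E * (g b * exp c)" using Tg[of 0] gb E0 by (intro mult_left_mono) auto
    also have "\<dots> = \<eta> * g b" using Ec by (simp add: algebra_simps)
    finally show ?thesis .
  qed
  have close: "\<bar>f t - g t\<bar> \<le> \<delta>" if "t \<ge> 0" for t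
    using A(14) that unfolding \<delta>_def E_def p_def by simp
  define x where "x = b / a"
  define y where "y = a / b"
  have bx: "b = x * a" using fa by (simp add: x_def)
  have ay: "a = y * b" using gb by (simp add: y_def)
  have y0: "y > 0" using fa gb by (simp add: y_def)
  have keyA: "b ^ m * f b \<le> a ^ m * f a"
  proof -
    have "b ^ m * f b \<le> b ^ m * (f a * exp (c * (1 - b / a)))"
      using Tf[of b] gb by (intro mult_left_mono) auto
    also have "\<dots> = f a * ((x * a) ^ m * exp (real m * (1 - x)))"
      unfolding c_def x_def[symmetric] bx[symmetric] by (simp add: algebra_simps)
    also have "\<dots> = f a * (a ^ m * (x * exp (1 - x)) ^ m)" using pow_exp_eq[OF fa(1)] by simp
    also have "\<dots> \<le> f a * (a ^ m * 1)"
    proof -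
      have "0 \<le> x" using fa gb by (simp add: x_def)
      then have "(x * exp (1 - x)) ^ m \<le> 1" using u_le1[of x] by (intro power_le_one) auto
      then show ?thesis using fa by (intro mult_left_mono) auto
    qed
    finally show ?thesis by (simp add: algebra_simps)
  qed
  have keyB: "g b * (1 - \<eta>) \<le> f b" using close[of b] gb dg by (simp add: algebra_simps abs_le_iff)
  have keyC: "f a * (1 - \<eta>) \<le> g b * exp (c * (1 - y))"
  proof -
    have "f a * (1 - \<eta>) \<le> g a" using close[of a] fa df by (simp add: algebra_simps abs_le_iff)
    also have "\<dots> \<le> g b * exp (c * (1 - y))" using Tg[of a] fa by (simp add: y_def)
    finally show ?thesis .
  qed
  define v where "v = y * exp (1 - y)"
  have v0: "v > 0" using y0 by (simp add: v_def)
  have v1: "v \<le> 1" using u_le1 by (simp add: v_def)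
  have \<eta>1: "\<eta> \<le> 1/100"
  proof -
    have "exp (5::real) \<ge> 1 + 5 + 5\<^sup>2 / 2" by (rule exp_lower_Taylor_quadratic) simp
    then have e5: "exp (5::real) \<ge> 18" by simp
    have "exp (4::real) \<ge> 1 + 4 + 4\<^sup>2 / 2" by (rule exp_lower_Taylor_quadratic) simp
    then have e4: "exp (4::real) \<ge> 13" by simp
    have "exp (9::real) = exp 5 * exp 4" by (simp flip: exp_add)
    also have "\<dots> \<ge> 18 * 13" using e5 e4 by (intro mult_mono) auto
    finally have e9: "exp (9::real) \<ge> 100" by simp
    have "4 * p + 1 \<ge> 9" using p1 A(1) by (simp add: p_def)
    then have "exp (4 * p + 1) \<ge> exp 9" by simp
    then have "exp (4 * p + 1) \<ge> 100" using e9 by linarith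
    moreover have "exp (- 4 * p - 1) * exp (4 * p + 1) = 1" by (simp flip: exp_add)
    ultimately have "exp (- 4 * p - 1) * 100 \<le> 1"
      by (metis exp_gt_zero less_eq_real_def mult_left_mono)
    then show ?thesis unfolding \<eta>_def by simp
  qed
  have main: "(1 - \<eta>) * (1 - \<eta>) \<le> v ^ m"
  proof -
    have gbm: "b ^ m * g b > 0" using gb by simp
    have "(b ^ m * g b) * ((1 - \<eta>) * (1 - \<eta>)) = (b ^ m * (g b * (1 - \<eta>))) * (1 - \<eta>)" by (simp add: algebra_simps)
    also have "\<dots> \<le> (b ^ m * f b) * (1 - \<eta>)" using keyB gb \<eta>1 by (intro mult_right_mono mult_left_mono) auto
    also have "\<dots> \<le> (a ^ m * f a) * (1 - \<eta>)" using keyA \<eta>1 by (intro mult_right_mono) auto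
    also have "\<dots> = a ^ m * (f a * (1 - \<eta>))" by simp
    also have "\<dots> \<le> a ^ m * (g b * exp (c * (1 - y)))" using keyC fa by (intro mult_left_mono) auto
    also have "\<dots> = g b * ((y * b) ^ m * exp (real m * (1 - y)))" unfolding c_def ay[symmetric] by (simp add: algebra_simps)
    also have "\<dots> = g b * (b ^ m * v ^ m)" using pow_exp_eq[OF gb(1)] by (simp add: v_def)
    also have "\<dots> = (b ^ m * g b) * v ^ m" by simp
    finally show ?thesis using gbm by (rule mult_left_le_imp_le)
  qed
  have "v ^ m \<le> v ^ 1" using v0 v1 m1 by (intro power_decreasing) auto
  moreover have "(1 - \<eta>) * (1 - \<eta>) = 1 - 2 * \<eta> + \<eta> * \<eta>" by algebra
  moreover have "\<eta> * \<eta> \<ge> 0" by simp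
  ultimately have "1 - 2 * \<eta> \<le> v" using main by (simp only: power_one_right)
  then have "1 - 2 * \<eta> \<le> y * exp (1 - y)" unfolding v_def .
  moreover have "18 * \<eta> \<le> (exp (- p))\<^sup>2"
  proof -
    have "exp (5::real) \<ge> 1 + 5 + 5\<^sup>2 / 2" by (rule exp_lower_Taylor_quadratic) simp
    then have e5: "exp (5::real) \<ge> 18" by simp
    have "2 * p + 1 \<ge> 5" using A(1) by (simp add: p_def)
    then have "exp (2 * p + 1) \<ge> exp 5" by simp
    then have "exp (2 * p + 1) \<ge> 18" using e5 by linarith
    then have "18 * exp (- 4 * p - 1) \<le> exp (2 * p + 1) * exp (- 4 * p - 1)" by simp
    also have "\<dots> = (exp (- p))\<^sup>2" by (simp add: power2_eq_square flip: exp_add)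
    finally show ?thesis unfolding \<eta>_def .
  qed
  ultimately have "1 - exp (- p) \<le> y \<and> y \<le> 1 + exp (- p)"
    using final_ineq[OF y0 _ \<eta>1] \<eta>0 by simp
  then have "(1 - exp (- p)) * b \<le> y * b \<and> y * b \<le> (1 + exp (- p)) * b"
    using gb by (auto intro: mult_right_mono)
  then have "(1 - exp (- p)) * b \<le> a \<and> a \<le> (1 + exp (- p)) * b" using ay by simp
  then show ?thesis unfolding a_def b_def p_def .
qed

end
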